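(* Let $(X,S,\beta)$ be a virtual pair, $H$ a group, and let $(f,g)$ and $(\tilde f,g)$ be two cohomologous noncommutative 2-cocycle pairs $X\times X\to H$. Then for every oriented virtual link diagram $L=K_1\cup\dots\cup K_r$, every coloring $\mathcal C$ of $L$ by $(X,S,\beta)$ and every $i$, $[\Psi_i(L,\mathcal C,f,g)]=[\Psi_i(L,\mathcal C,\tilde f,g)]$ (equality of conjugacy classes in $H$).
   Context: For a bijection $\sigma\colon X\times X\to X\times X$ write $\sigma(x,y)=(\sigma^1(x,y),\sigma^2(x,y))$. A biquandle is a bijection $\sigma$ satisfying $(\mathrm{id}\times\sigma)(\sigma\times\mathrm{id})(\mathrm{id}\times\sigma)=(\sigma\times\mathrm{id})(\mathrm{id}\times\sigma)(\sigma\times\mathrm{id})$, such that for all $x,z$ there is a unique $y$ with $\sigma^1(x,y)=z$, for all $y,t$ there is a unique $x$ with $\sigma^2(x,y)=t$, and there is a bijection $s_\sigma$ with $\{(x,y):\sigma(x,y)=(x,y)\}=\{(x,s_\sigma(x))\}$. A virtual pair $(X,S,\beta)$: biquandles $(X,S),(X,\beta)$ with $\beta^2=\mathrm{id}$ and $(\mathrm{id}\times\beta)(S\times\mathrm{id})(\mathrm{id}\times\beta)=(\beta\times\mathrm{id})(\mathrm{id}\times S)(\beta\times\mathrm{id})$; write $s=s_S$, $s_\beta$. A noncommutative 2-cocycle pair is $f,g\colon X\times X\to H$ with, for all $x,y,z$: (f1) $f(x,y)f(S^2(x,y),z)=f(x,S^1(y,z))f(S^2(x,S^1(y,z)),S^2(y,z))$;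 (f2) $f(S^1(x,y),S^1(S^2(x,y),z))=f(y,z)$; (f3) $f(x,s(x))=1$; (g1) $g(x,s_\beta(x))=1$; (g2) $g(x,y)g(\beta(x,y))=1$; (g3) $g(x,y)g(\beta^2(x,y),z)=g(x,\beta^1(y,z))g(\beta^2(x,\beta^1(y,z)),\beta^2(y,z))$; (g4) $g(y,z)g(\beta^2(x,\beta^1(y,z)),\beta^2(y,z))=g(x,y)g(\beta^1(x,y),\beta^1(\beta^2(x,y),z))$; (g5) $g(y,z)g(x,\beta^1(y,z))=g(\beta^2(x,y),z)g(\beta^1(x,y),\beta^1(\beta^2(x,y),z))$; (m1) $g(y,z)=g(S^1(x,y),\beta^1(S^2(x,y),z))$; (m2) $g(y,z)g(x,\beta^1(y,z))=g(S^2(x,y),z)g(S^1(x,y),\beta^1(S^2(x,y),z))$; (m3) $g(x,\beta^1(y,z))f(\beta^2(x,\beta^1(y,z)),\beta^2(y,z))=f(x,y)g(S^2(x,y),z)$. $(f,g)$ and $(\tilde f,g)$ are cohomologous if there is $\lambda\colon X\to H$ with $\tilde f(x,y)=\lambda(x)f(x,y)\lambda(S^2(x,y))^{-1}$ for all $x,y$, where for all $x,y$: $\lambda(x)=\lambda(s_S(x))$, $\lambda(y)=\lambda(S^1(x,y))$, $\lambda(y)=\lambda(\beta^1(x,y))$, and $\lambda(x)$ commutes with $g(x,y)$. Colorings and $\Psi_i$: drawing each crossing with both strands oriented downward, a coloring assigns elements of $X$ to semi-arcs such that at a positive classical crossing (under-strand top-left to bottom-right, over-strand top-right to bottom-left)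 with incoming colors $x$ (top-left), $y$ (top-right) the outgoing colors are $S^1(x,y)$ (bottom-left), $S^2(x,y)$ (bottom-right); at a negative classical crossing (over-strand top-left to bottom-right, under-strand top-right to bottom-left) with outgoing colors $x$ (bottom-left), $y$ (bottom-right) the incoming colors are $S^1(x,y)$ (top-left), $S^2(x,y)$ (top-right); at a virtual crossing with incoming $x$ (top-left), $y$ (top-right) the outgoing colors are $\beta^1(x,y)$ (bottom-left), $\beta^2(x,y)$ (bottom-right). Weights: $f(x,y)$ at a positive crossing, $f(x,y)^{-1}$ at a negative crossing, $g(x,y)$ at a virtual crossing (notation as just described). Choosing a base point on $K_i$, $\Psi_i(L,\mathcal C,f,g)$ is the product, in the order met while traversing $K_i$ along its orientation, of the weights of the classical crossings where $K_i$ passes along the under-strand and of the virtual crossings through which $K_i$ passes. $[h]$ is the conjugacy class of $h$. *)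

theory Defs
  imports "HOL-Algebra.Group"
begin

definition S1 :: "('x \<times> 'x \<Rightarrow> 'x \<times> 'x) \<Rightarrow> 'x \<Rightarrow> 'x \<Rightarrow> 'x" where
  "S1 \<sigma> x y = fst (\<sigma> (x, y))"

definition S2 :: "('x \<times> 'x \<Rightarrow> 'x \<times> 'x) \<Rightarrow> 'x \<Rightarrow> 'x \<Rightarrow> 'x" where
  "S2 \<sigma> x y = snd (\<sigma> (x, y))"

definition sig_id :: "('x \<times> 'x \<Rightarrow> 'x \<times> 'x) \<Rightarrow> 'x \<times> 'x \<times> 'x \<Rightarrow> 'x \<times> 'x \<times> 'x" where
  "sig_id \<sigma> t = (case t of (x, y, z) \<Rightarrow> (fst (\<sigma> (x, y)), snd (\<sigma> (x, y)), z))"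

definition id_sig :: "('x \<times> 'x \<Rightarrow> 'x \<times> 'x) \<Rightarrow> 'x \<times> 'x \<times> 'x \<Rightarrow> 'x \<times> 'x \<times> 'x" where
  "id_sig \<sigma> t = (case t of (x, y, z) \<Rightarrow> (x, fst (\<sigma> (y, z)), snd (\<sigma> (y, z))))"

definition biquandle :: "('x \<times> 'x \<Rightarrow> 'x \<times> 'x) \<Rightarrow> bool" where
  "biquandle \<sigma> \<longleftrightarrow>
     bij \<sigma> \<and>
     id_sig \<sigma> \<circ> sig_id \<sigma> \<circ> id_sig \<sigma> = sig_id \<sigma> \<circ> id_sig \<sigma> \<circ> sig_id \<sigma> \<and>
     (\<forall>x z. \<exists>!y. S1 \<sigma> x y = z) \<and>
     (\<forall>y t. \<exists>!x. S2 \<sigma> x y = t) \<and>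
     (\<exists>s. bij s \<and> {(x, y). \<sigma> (x, y) = (x, y)} = {(x, s x) | x. True})"

text \<open>The map s_sigma (well defined for a biquandle)\<close>
definition s_of :: "('x \<times> 'x \<Rightarrow> 'x \<times> 'x) \<Rightarrow> 'x \<Rightarrow> 'x" where
  "s_of \<sigma> x = (THE y. \<sigma> (x, y) = (x, y))"

definition virtual_pair :: "('x \<times> 'x \<Rightarrow> 'x \<times> 'x) \<Rightarrow> ('x \<times> 'x \<Rightarrow> 'x \<times> 'x) \<Rightarrow> bool" where
  "virtual_pair S \<beta> \<longleftrightarrow>
     biquandle S \<and> biquandle \<beta> \<and> \<beta> \<circ> \<beta> = id \<and>
     id_sig \<beta> \<circ> sig_id S \<circ> id_sig \<beta> = sig_id \<beta> \<circ> id_sig S \<circ> sig_id \<beta>"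

definition nc_cocycle_pair ::
  "('a, 'b) monoid_scheme \<Rightarrow> ('x \<times> 'x \<Rightarrow> 'x \<times> 'x) \<Rightarrow> ('x \<times> 'x \<Rightarrow> 'x \<times> 'x)
     \<Rightarrow> ('x \<Rightarrow> 'x \<Rightarrow> 'a) \<Rightarrow> ('x \<Rightarrow> 'x \<Rightarrow> 'a) \<Rightarrow> bool" where
  "nc_cocycle_pair H S \<beta> f g \<longleftrightarrow>
     (\<forall>x y. f x y \<in> carrier H) \<and> (\<forall>x y. g x y \<in> carrier H) \<and>
     (\<forall>x y z. f x y \<otimes>\<^bsub>H\<^esub> f (S2 S x y) z
        = f x (S1 S y z) \<otimes>\<^bsub>H\<^esub> f (S2 S x (S1 S y z)) (S2 S y z)) \<and>
     (\<forall>x y z. f (S1 S x y) (S1 S (S2 S x y) z) = f y z) \<and>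
     (\<forall>x. f x (s_of S x) = \<one>\<^bsub>H\<^esub>) \<and>
     (\<forall>x. g x (s_of \<beta> x) = \<one>\<^bsub>H\<^esub>) \<and>
     (\<forall>x y. g x y \<otimes>\<^bsub>H\<^esub> g (S1 \<beta> x y) (S2 \<beta> x y) = \<one>\<^bsub>H\<^esub>) \<and>
     (\<forall>x y z. g x y \<otimes>\<^bsub>H\<^esub> g (S2 \<beta> x y) z
        = g x (S1 \<beta> y z) \<otimes>\<^bsub>H\<^esub> g (S2 \<beta> x (S1 \<beta> y z)) (S2 \<beta> y z)) \<and>
     (\<forall>x y z. g y z \<otimes>\<^bsub>H\<^esub> g (S2 \<beta> x (S1 \<beta> y z)) (S2 \<beta> y z)
        = g x y \<otimes>\<^bsub>H\<^esub> g (S1 \<beta> x y) (S1 \<beta> (S2 \<beta> x y) z)) \<and>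
     (\<forall>x y z. g y z \<otimes>\<^bsub>H\<^esub> g x (S1 \<beta> y z)
        = g (S2 \<beta> x y) z \<otimes>\<^bsub>H\<^esub> g (S1 \<beta> x y) (S1 \<beta> (S2 \<beta> x y) z)) \<and>
     (\<forall>x y z. g y z = g (S1 S x y) (S1 \<beta> (S2 S x y) z)) \<and>
     (\<forall>x y z. g y z \<otimes>\<^bsub>H\<^esub> g x (S1 \<beta> y z)
        = g (S2 S x y) z \<otimes>\<^bsub>H\<^esub> g (S1 S x y) (S1 \<beta> (S2 S x y) z)) \<and>
     (\<forall>x y z. g x (S1 \<beta> y z) \<otimes>\<^bsub>H\<^esub> f (S2 \<beta> x (S1 \<beta> y z)) (S2 \<beta> y z)
        = f x y \<otimes>\<^bsub>H\<^esub> g (S2 S x y) z)"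

definition cohomologous ::
  "('a, 'b) monoid_scheme \<Rightarrow> ('x \<times> 'x \<Rightarrow> 'x \<times> 'x) \<Rightarrow> ('x \<times> 'x \<Rightarrow> 'x \<times> 'x)
     \<Rightarrow> ('x \<Rightarrow> 'x \<Rightarrow> 'a) \<Rightarrow> ('x \<Rightarrow> 'x \<Rightarrow> 'a) \<Rightarrow> ('x \<Rightarrow> 'x \<Rightarrow> 'a) \<Rightarrow> bool" where
  "cohomologous H S \<beta> f ft g \<longleftrightarrow>
     (\<exists>lam. (\<forall>x. lam x \<in> carrier H) \<and>
        (\<forall>x y. ft x y = lam x \<otimes>\<^bsub>H\<^esub> f x y \<otimes>\<^bsub>H\<^esub> inv\<^bsub>H\<^esub> (lam (S2 S x y))) \<and>
        (\<forall>x. lam x = lam (s_of S x)) \<and>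
        (\<forall>x y. lam y = lam (S1 S x y)) \<and>
        (\<forall>x y. lam y = lam (S1 \<beta> x y)) \<and>
        (\<forall>x y. lam x \<otimes>\<^bsub>H\<^esub> g x y = g x y \<otimes>\<^bsub>H\<^esub> lam x))"

definition conjugate :: "('a, 'b) monoid_scheme \<Rightarrow> 'a \<Rightarrow> 'a \<Rightarrow> bool" where
  "conjugate H a b \<longleftrightarrow> (\<exists>h \<in> carrier H. a = h \<otimes>\<^bsub>H\<^esub> b \<otimes>\<^bsub>H\<^esub> inv\<^bsub>H\<^esub> h)"

text \<open>
  Every crossing is drawn
  with both strands oriented downward; its two strands are the strand entering at
  top-left and leaving at bottom-right (strand True) and the strand entering at
  top-right and leaving at bottom-left (strand False).  A diagram is the list of its
  components; each component is the cyclic list of its passages (crossing, strand),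
  in the order met along the orientation starting from a base point.  Semi-arc j of
  component i is the one leaving passage j and entering passage (j+1) mod length.
  Under-strand: at a positive crossing it is strand True (top-left to bottom-right),
  at a negative crossing it is strand False (top-right to bottom-left).
\<close>

datatype ctype = Pos | Neg | Virt

type_synonym diagram = "(nat \<times> bool) list list"

definition diagram_ok :: "diagram \<Rightarrow> bool" where
  "diagram_ok D \<longleftrightarrow> distinct (concat D) \<and>
     (\<forall>c s. (c, s) \<in> set (concat D) \<longrightarrow> (c, \<not> s) \<in> set (concat D))"

definition crossings :: "diagram \<Rightarrow> nat set" where
  "crossings D = fst ` set (concat D)"

definition pos_of :: "diagram \<Rightarrow> nat \<times> bool \<Rightarrow> nat \<times> nat" where
  "pos_of D p = (THE ij. fst ij < length D \<and> snd ij < length (D ! fst ij) \<and>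
                          D ! fst ij ! snd ij = p)"

definition out_col :: "diagram \<Rightarrow> (nat \<Rightarrow> nat \<Rightarrow> 'x) \<Rightarrow> nat \<times> bool \<Rightarrow> 'x" where
  "out_col D col p = (case pos_of D p of (i, j) \<Rightarrow> col i j)"

definition in_col :: "diagram \<Rightarrow> (nat \<Rightarrow> nat \<Rightarrow> 'x) \<Rightarrow> nat \<times> bool \<Rightarrow> 'x" where
  "in_col D col p = (case pos_of D p of (i, j) \<Rightarrow>
      col i ((j + length (D ! i) - 1) mod length (D ! i)))"

definition col_tl :: "diagram \<Rightarrow> (nat \<Rightarrow> nat \<Rightarrow> 'x) \<Rightarrow> nat \<Rightarrow> 'x" where
  "col_tl D col c = in_col D col (c, True)"
definition col_tr :: "diagram \<Rightarrow> (nat \<Rightarrow> nat \<Rightarrow> 'x) \<Rightarrow> nat \<Rightarrow> 'x" where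
  "col_tr D col c = in_col D col (c, False)"
definition col_bl :: "diagram \<Rightarrow> (nat \<Rightarrow> nat \<Rightarrow> 'x) \<Rightarrow> nat \<Rightarrow> 'x" where
  "col_bl D col c = out_col D col (c, False)"
definition col_br :: "diagram \<Rightarrow> (nat \<Rightarrow> nat \<Rightarrow> 'x) \<Rightarrow> nat \<Rightarrow> 'x" where
  "col_br D col c = out_col D col (c, True)"

definition is_coloring ::
  "('x \<times> 'x \<Rightarrow> 'x \<times> 'x) \<Rightarrow> ('x \<times> 'x \<Rightarrow> 'x \<times> 'x) \<Rightarrow> (nat \<Rightarrow> ctype) \<Rightarrow> diagram
     \<Rightarrow> (nat \<Rightarrow> nat \<Rightarrow> 'x) \<Rightarrow> bool" where
  "is_coloring S \<beta> ctyp D col \<longleftrightarrow>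
     (\<forall>c \<in> crossings D.
        (ctyp c = Pos \<longrightarrow> (col_bl D col c, col_br D col c) = S (col_tl D col c, col_tr D col c)) \<and>
        (ctyp c = Neg \<longrightarrow> (col_tl D col c, col_tr D col c) = S (col_bl D col c, col_br D col c)) \<and>
        (ctyp c = Virt \<longrightarrow> (col_bl D col c, col_br D col c) = \<beta> (col_tl D col c, col_tr D col c)))"

definition passage_weight ::
  "('a, 'b) monoid_scheme \<Rightarrow> ('x \<Rightarrow> 'x \<Rightarrow> 'a) \<Rightarrow> ('x \<Rightarrow> 'x \<Rightarrow> 'a) \<Rightarrow> (nat \<Rightarrow> ctype)
     \<Rightarrow> diagram \<Rightarrow> (nat \<Rightarrow> nat \<Rightarrow> 'x) \<Rightarrow> nat \<times> bool \<Rightarrow> 'a" where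
  "passage_weight H f g ctyp D col p = (case p of (c, s) \<Rightarrow>
     (case ctyp c of
        Pos \<Rightarrow> (if s then f (col_tl D col c) (col_tr D col c) else \<one>\<^bsub>H\<^esub>)
      | Neg \<Rightarrow> (if s then \<one>\<^bsub>H\<^esub> else inv\<^bsub>H\<^esub> (f (col_bl D col c) (col_br D col c)))
      | Virt \<Rightarrow> g (col_tl D col c) (col_tr D col c)))"

definition Psi ::
  "('a, 'b) monoid_scheme \<Rightarrow> (nat \<Rightarrow> ctype) \<Rightarrow> diagram \<Rightarrow> (nat \<Rightarrow> nat \<Rightarrow> 'x)
     \<Rightarrow> ('x \<Rightarrow> 'x \<Rightarrow> 'a) \<Rightarrow> ('x \<Rightarrow> 'x \<Rightarrow> 'a) \<Rightarrow> nat \<Rightarrow> 'a" where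
  "Psi H ctyp D col f g i =
     foldr (\<lambda>p acc. passage_weight H f g ctyp D col p \<otimes>\<^bsub>H\<^esub> acc) (D ! i) \<one>\<^bsub>H\<^esub>"

end

theory Submission
  imports Defs
begin

lemma (in group) tele:
  assumes "\<And>x. x \<in> set xs \<Longrightarrow> w x \<in> carrier G"
    and "\<And>x. x \<in> set xs \<Longrightarrow> L x \<in> carrier G"
    and "\<And>x. x \<in> set xs \<Longrightarrow> R x \<in> carrier G"
    and "\<And>x. x \<in> set xs \<Longrightarrow> w' x = L x \<otimes> w x \<otimes> inv R x"
    and "\<And>k. Suc k < length xs \<Longrightarrow> R (xs ! k) = L (xs ! Suc k)"
    and "xs \<noteq> []"
  shows "foldr (\<lambda>p acc. w' p \<otimes> acc) xs \<one> = L (hd xs) \<otimes> foldr (\<lambda>p acc. w p \<otimes> acc) xs \<one> \<otimes> inv R (last xs)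
     \<and> foldr (\<lambda>p acc. w p \<otimes> acc) xs \<one> \<in> carrier G"
  using assms
proof (induction xs)
  case Nil then show ?case by simp
next
  case (Cons x ys)
  have c: "w x \<in> carrier G" "L x \<in> carrier G" "R x \<in> carrier G" "w' x = L x \<otimes> w x \<otimes> inv R x"
    using Cons.prems(1-4) by simp_all
  show ?case
  proof (cases "ys = []")
    case True
    have "L x \<otimes> w x \<otimes> inv R x \<otimes> \<one> = L x \<otimes> (w x \<otimes> \<one>) \<otimes> inv R x"
      using c by simp
    then show ?thesis using True c by simp
  next
    case False
    have p1: "\<And>y. y \<in> set ys \<Longrightarrow> w y \<in> carrier G" using Cons.prems(1) by simp
    have p2: "\<And>y. y \<in> set ys \<Longrightarrow> L y \<in> carrier G" using Cons.prems(2) by simp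
    have p3: "\<And>y. y \<in> set ys \<Longrightarrow> R y \<in> carrier G" using Cons.prems(3) by simp
    have p4: "\<And>y. y \<in> set ys \<Longrightarrow> w' y = L y \<otimes> w y \<otimes> inv R y" using Cons.prems(4) by simp
    have p5: "R (ys ! k) = L (ys ! Suc k)" if "Suc k < length ys" for k
      using Cons.prems(5)[of "Suc k"] that by simp
    have IH: "foldr (\<lambda>p acc. w' p \<otimes> acc) ys \<one> = L (hd ys) \<otimes> foldr (\<lambda>p acc. w p \<otimes> acc) ys \<one> \<otimes> inv R (last ys)
     \<and> foldr (\<lambda>p acc. w p \<otimes> acc) ys \<one> \<in> carrier G"
      by (rule Cons.IH[OF p1 p2 p3 p4 p5 False])
    have h: "R x = L (hd ys)" using Cons.prems(5)[of 0] False by (simp add: hd_conv_nth)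
    have lc: "R (last ys) \<in> carrier G" using p3 False by simp
    let ?F = "foldr (\<lambda>p acc. w p \<otimes> acc) ys \<one>"
    have Fc: "?F \<in> carrier G" using IH by simp
    have "foldr (\<lambda>p acc. w' p \<otimes> acc) (x # ys) \<one> = (L x \<otimes> w x \<otimes> inv R x) \<otimes> (R x \<otimes> ?F \<otimes> inv R (last ys))"
      using IH h c by simp
    also have "\<dots> = L x \<otimes> w x \<otimes> (inv R x \<otimes> R x) \<otimes> ?F \<otimes> inv R (last ys)"
      using c Fc lc by (simp only: m_assoc m_closed inv_closed)
    also have "\<dots> = L x \<otimes> (w x \<otimes> ?F) \<otimes> inv R (last ys)"
      using c Fc lc by (simp add: m_assoc)
    finally show ?thesis using c Fc False by simp
  qed
qed

lemma pos_unique: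
  assumes "distinct (concat D)" "i < length D" "j < length (D ! i)"
    "i' < length D" "j' < length (D ! i')" "D ! i ! j = D ! i' ! j'"
  shows "i = i' \<and> j = j'"
  using assms
proof (induction D arbitrary: i i')
  case Nil then show ?case by simp
next
  case (Cons a D)
  show ?case
  proof (cases i)
    case 0
    then show ?thesis
    proof (cases i')
      case 0
      have "i' = 0" by fact
      with \<open>i = 0\<close> Cons.prems show ?thesis by (simp add: nth_eq_iff_index_eq)
    next
      case (Suc k)
      have k: "k < length D" "j' < length (D ! k)" using Cons.prems Suc by auto
      have "D ! k ! j' \<in> set (concat D)" unfolding set_concat using k by (meson UN_I nth_mem)
      moreover have "a ! j \<in> set a" using Cons.prems(3) \<open>i = 0\<close> by simp
      moreover have "a ! j = D ! k ! j'" using Cons.prems 0 Suc by simp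
      moreover have "set a \<inter> set (concat D) = {}" using Cons.prems(1) by simp
      ultimately have False by (metis IntI empty_iff)
      then show ?thesis ..
    qed
  next
    case (Suc m)
    then show ?thesis
    proof (cases i')
      case 0
      have k: "m < length D" "j < length (D ! m)" using Cons.prems Suc by auto
      have "D ! m ! j \<in> set (concat D)" unfolding set_concat using k by (meson UN_I nth_mem)
      moreover have "a ! j' \<in> set a" using Cons.prems(5) \<open>i' = 0\<close> by simp
      moreover have "a ! j' = D ! m ! j" using Cons.prems 0 Suc by simp
      moreover have "set a \<inter> set (concat D) = {}" using Cons.prems(1) by simp
      ultimately have False by (metis IntI empty_iff)
      then show ?thesis ..
    next
      case (Suc k)
      with \<open>i = Suc m\<close> Cons.prems Cons.IH[of m k] show ?thesis by auto
    qed
  qed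
qed

lemma pos_of_eq:
  assumes "distinct (concat D)" "i < length D" "j < length (D ! i)"
  shows "pos_of D (D ! i ! j) = (i, j)"
  unfolding pos_of_def
proof (rule the_equality)
  show "fst (i, j) < length D \<and> snd (i, j) < length (D ! fst (i, j)) \<and> D ! fst (i, j) ! snd (i, j) = D ! i ! j"
    using assms by simp
next
  fix ij :: "nat \<times> nat"
  assume a: "fst ij < length D \<and> snd ij < length (D ! fst ij) \<and> D ! fst ij ! snd ij = D ! i ! j"
  then have "fst ij = i \<and> snd ij = j"
    using pos_unique[OF assms(1), of "fst ij" "snd ij" i j] assms(2,3) by blast
  then show "ij = (i, j)" by (simp add: prod_eq_iff)
qed

lemma (in group) comm_inv:
  assumes "a \<in> carrier G" "b \<in> carrier G" "a \<otimes> b = b \<otimes> a"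
  shows "a \<otimes> inv b = inv b \<otimes> a"
proof -
  have "inv b \<otimes> (b \<otimes> a) = a"
    using assms by (simp add: m_assoc[symmetric] l_inv)
  then have "a \<otimes> inv b = inv b \<otimes> (b \<otimes> a) \<otimes> inv b" by simp
  also have "\<dots> = inv b \<otimes> (a \<otimes> b) \<otimes> inv b" using assms by simp
  also have "\<dots> = inv b \<otimes> a" using assms by (metis m_assoc r_inv r_one inv_closed m_closed)
  finally show ?thesis .
qed

theorem mainTheorem7:
  fixes H :: "('a, 'b) monoid_scheme"
    and S \<beta> :: "'x \<times> 'x \<Rightarrow> 'x \<times> 'x"
    and f ft g :: "'x \<Rightarrow> 'x \<Rightarrow> 'a"
    and ctyp :: "nat \<Rightarrow> ctype" and D :: diagram and col :: "nat \<Rightarrow> nat \<Rightarrow> 'x" and i :: nat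
  assumes "virtual_pair S \<beta>"
    and "group H"
    and "nc_cocycle_pair H S \<beta> f g"
    and "nc_cocycle_pair H S \<beta> ft g"
    and "cohomologous H S \<beta> f ft g"
    and "diagram_ok D"
    and "is_coloring S \<beta> ctyp D col"
    and "i < length D"
  shows "conjugate H (Psi H ctyp D col f g i) (Psi H ctyp D col ft g i)"
proof -
  interpret group H by fact
  obtain lam where lc: "\<And>x. lam x \<in> carrier H"
    and ft: "\<And>x y. ft x y = lam x \<otimes>\<^bsub>H\<^esub> f x y \<otimes>\<^bsub>H\<^esub> inv\<^bsub>H\<^esub> (lam (S2 S x y))"
    and l1: "\<And>x y. lam y = lam (S1 S x y)"
    and l2: "\<And>x y. lam y = lam (S1 \<beta> x y)"
    and lg: "\<And>x y. lam x \<otimes>\<^bsub>H\<^esub> g x y = g x y \<otimes>\<^bsub>H\<^esub> lam x"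
    using assms(5) unfolding cohomologous_def
    apply (elim exE conjE)
    subgoal for lam by (rule that[of lam]) simp_all
    done
  have fc: "\<And>x y. f x y \<in> carrier H" using assms(3) unfolding nc_cocycle_pair_def by (elim conjE) simp
  have gc: "\<And>x y. g x y \<in> carrier H" using assms(3) unfolding nc_cocycle_pair_def by (elim conjE) simp
  have g2: "\<And>x y. g x y \<otimes>\<^bsub>H\<^esub> g (S1 \<beta> x y) (S2 \<beta> x y) = \<one>\<^bsub>H\<^esub>"
    using assms(3) unfolding nc_cocycle_pair_def by (elim conjE) simp
  have bb0: "\<beta> \<circ> \<beta> = id" using assms(1) unfolding virtual_pair_def by (elim conjE) simp
  have bb: "\<beta> (\<beta> p) = p" for p using fun_cong[OF bb0, of p] by simp
  define L where "L p = lam (in_col D col p)" for p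
  define R where "R p = lam (out_col D col p)" for p
  let ?w = "passage_weight H f g ctyp D col"
  let ?w' = "passage_weight H ft g ctyp D col"
  have wc: "?w p \<in> carrier H" for p
    by (auto simp: passage_weight_def fc gc split: prod.split ctype.split)
  have key: "?w' (c, s) = L (c, s) \<otimes>\<^bsub>H\<^esub> ?w (c, s) \<otimes>\<^bsub>H\<^esub> inv\<^bsub>H\<^esub> R (c, s)"
    if cD: "c \<in> crossings D" for c s
  proof -
    define tl where "tl = col_tl D col c"
    define tr where "tr = col_tr D col c"
    define bl where "bl = col_bl D col c"
    define br where "br = col_br D col c"
    have col: "(ctyp c = Pos \<longrightarrow> (bl, br) = S (tl, tr)) \<and>
        (ctyp c = Neg \<longrightarrow> (tl, tr) = S (bl, br)) \<and>
        (ctyp c = Virt \<longrightarrow> (bl, br) = \<beta> (tl, tr))"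
      using assms(7) cD unfolding is_coloring_def tl_def tr_def bl_def br_def by (elim ballE) (simp, simp add: cD)
    have LR: "L (c, True) = lam tl" "L (c, False) = lam tr" "R (c, True) = lam br" "R (c, False) = lam bl"
      unfolding L_def R_def tl_def tr_def bl_def br_def col_tl_def col_tr_def col_bl_def col_br_def by simp_all
    show ?thesis
    proof (cases "ctyp c")
      case Pos
      then have ee: "(bl, br) = S (tl, tr)" using col by simp
      have e: "bl = S1 S tl tr" "br = S2 S tl tr" unfolding S1_def S2_def
        using arg_cong[OF ee, of fst] arg_cong[OF ee, of snd] by simp_all
      show ?thesis
      proof (cases s)
        case True then show ?thesis using Pos LR e
          by (simp add: passage_weight_def ft tl_def[symmetric] tr_def[symmetric])
      next
        case False
        have "lam tr = lam bl" using e l1 by simp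
        then show ?thesis using Pos LR False lc by (simp add: passage_weight_def r_inv)
      qed
    next
      case Neg
      then have ee: "(tl, tr) = S (bl, br)" using col by simp
      have e: "tl = S1 S bl br" "tr = S2 S bl br" unfolding S1_def S2_def
        using arg_cong[OF ee, of fst] arg_cong[OF ee, of snd] by simp_all
      show ?thesis
      proof (cases s)
        case True
        have "lam tl = lam br" using e l1 by simp
        then show ?thesis using Neg LR True lc by (simp add: passage_weight_def r_inv)
      next
        case False
        have "inv\<^bsub>H\<^esub> ft bl br = lam tr \<otimes>\<^bsub>H\<^esub> inv\<^bsub>H\<^esub> f bl br \<otimes>\<^bsub>H\<^esub> inv\<^bsub>H\<^esub> lam bl"
          using e lc fc by (simp add: ft inv_mult_group m_assoc)
        then show ?thesis using Neg LR False
          by (simp add: passage_weight_def bl_def[symmetric] br_def[symmetric])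
      qed
    next
      case Virt
      then have ee: "(bl, br) = \<beta> (tl, tr)" using col by simp
      have e: "bl = S1 \<beta> tl tr" "br = S2 \<beta> tl tr" unfolding S1_def S2_def
        using arg_cong[OF ee, of fst] arg_cong[OF ee, of snd] by simp_all
      have e2: "tl = S1 \<beta> bl br" using arg_cong[OF ee, of "\<lambda>p. fst (\<beta> p)"] bb unfolding S1_def by simp
      have "g tl tr \<otimes>\<^bsub>H\<^esub> g bl br = \<one>\<^bsub>H\<^esub>" using g2[of tl tr] e by simp
      then have gi: "g tl tr = inv\<^bsub>H\<^esub> g bl br" using gc by (metis inv_equality)
      have w: "?w (c, s) = g tl tr" using Virt by (simp add: passage_weight_def tl_def tr_def)
      have w': "?w' (c, s) = g tl tr" using Virt by (simp add: passage_weight_def tl_def tr_def)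
      have cm: "lam x \<otimes>\<^bsub>H\<^esub> h \<otimes>\<^bsub>H\<^esub> inv\<^bsub>H\<^esub> lam x = h" if "lam x \<otimes>\<^bsub>H\<^esub> h = h \<otimes>\<^bsub>H\<^esub> lam x" "h \<in> carrier H" for x h
        using that lc[of x] by (simp add: m_assoc r_inv)
      show ?thesis
      proof (cases s)
        case True
        have "lam br = lam tl" using e2 l2 by simp
        then show ?thesis using LR True w w' cm[OF lg gc] by simp
      next
        case False
        have "lam tr = lam bl" using e l2 by simp
        moreover have "lam bl \<otimes>\<^bsub>H\<^esub> g tl tr = g tl tr \<otimes>\<^bsub>H\<^esub> lam bl"
          using gi comm_inv[OF lc gc lg] by simp
        ultimately show ?thesis using LR False w w' cm[OF _ gc] by simp
      qed
    qed
  qed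
  define xs where "xs = D ! i"
  have dist: "distinct (concat D)" using assms(6) unfolding diagram_ok_def by simp
  have xsD: "fst x \<in> crossings D" if "x \<in> set xs" for x
  proof -
    have "D ! i \<in> set D" using assms(8) by simp
    then have "x \<in> set (concat D)" using that unfolding xs_def set_concat by blast
    then show ?thesis unfolding crossings_def by (rule imageI)
  qed
  let ?n = "length xs"
  have outc: "out_col D col (xs ! k) = col i k" if "k < ?n" for k
    using pos_of_eq[OF dist assms(8)] that unfolding out_col_def xs_def by simp
  have inc: "in_col D col (xs ! k) = col i ((k + ?n - 1) mod ?n)" if "k < ?n" for k
    using pos_of_eq[OF dist assms(8)] that unfolding in_col_def xs_def by simp
  show ?thesis
  proof (cases "xs = []")
    case True
    then show ?thesis unfolding conjugate_def Psi_def xs_def[symmetric]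
      by (intro bexI[of _ "\<one>\<^bsub>H\<^esub>"]) auto
  next
    case False
    have T: "foldr (\<lambda>p acc. ?w' p \<otimes>\<^bsub>H\<^esub> acc) xs \<one>\<^bsub>H\<^esub> = L (hd xs) \<otimes>\<^bsub>H\<^esub> foldr (\<lambda>p acc. ?w p \<otimes>\<^bsub>H\<^esub> acc) xs \<one>\<^bsub>H\<^esub> \<otimes>\<^bsub>H\<^esub> inv\<^bsub>H\<^esub> R (last xs)
      \<and> foldr (\<lambda>p acc. ?w p \<otimes>\<^bsub>H\<^esub> acc) xs \<one>\<^bsub>H\<^esub> \<in> carrier H"
    proof (rule tele)
      show "\<And>x. x \<in> set xs \<Longrightarrow> ?w x \<in> carrier H" using wc by blast
      show "\<And>x. x \<in> set xs \<Longrightarrow> L x \<in> carrier H" using lc L_def by simp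
      show "\<And>x. x \<in> set xs \<Longrightarrow> R x \<in> carrier H" using lc R_def by simp
      show "\<And>x. x \<in> set xs \<Longrightarrow> ?w' x = L x \<otimes>\<^bsub>H\<^esub> ?w x \<otimes>\<^bsub>H\<^esub> inv\<^bsub>H\<^esub> R x"
        using key xsD by (metis prod.collapse)
      show "R (xs ! k) = L (xs ! Suc k)" if "Suc k < ?n" for k
      proof -
        have "(Suc k + ?n - 1) mod ?n = k" using that by simp
        then show ?thesis using that outc[of k] inc[of "Suc k"] unfolding L_def R_def by simp
      qed
      show "xs \<noteq> []" by fact
    qed
    have hl: "L (hd xs) = R (last xs)"
    proof -
      have "hd xs = xs ! 0" "last xs = xs ! (?n - 1)" using False by (simp_all add: hd_conv_nth last_conv_nth)
      moreover have "(0 + ?n - 1) mod ?n = ?n - 1" using False by simp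
      ultimately show ?thesis using False outc[of "?n - 1"] inc[of 0] unfolding L_def R_def by simp
    qed
    let ?h = "R (last xs)"
    let ?P = "foldr (\<lambda>p acc. ?w p \<otimes>\<^bsub>H\<^esub> acc) xs \<one>\<^bsub>H\<^esub>"
    have hc: "?h \<in> carrier H" using lc R_def by simp
    have Pc: "?P \<in> carrier H" using T by simp
    have "?P = inv\<^bsub>H\<^esub> ?h \<otimes>\<^bsub>H\<^esub> (?h \<otimes>\<^bsub>H\<^esub> ?P \<otimes>\<^bsub>H\<^esub> inv\<^bsub>H\<^esub> ?h) \<otimes>\<^bsub>H\<^esub> inv\<^bsub>H\<^esub> (inv\<^bsub>H\<^esub> ?h)"
      using hc Pc by (simp add: m_assoc[symmetric] l_inv) (simp add: m_assoc r_inv)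
    then show ?thesis unfolding conjugate_def Psi_def xs_def[symmetric] using T hl hc
      by (intro bexI[of _ "inv\<^bsub>H\<^esub> ?h"]) auto
  qed
qed

end
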